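(* Let $f$ be a quadratic rational map with critical values $v_1,v_2$ satisfying $f(v_1)=f(v_2)=\beta$, $f(\beta)=\alpha$, $f(\alpha)=\alpha$, with $\alpha\neq\beta$. Then $$[v_1:v_2:\alpha:\beta]\in\{-1,\ 3+2\sqrt2,\ 3-2\sqrt2\}.$$
   Context: For four points $p,q,r,s\in\hat{\mathbb{C}}$ with $p,q,r$ distinct, the cross-ratio $[p:q:r:s]$ is defined as $z(s)$, where $z$ is the unique Möbius transformation with $z(p)=0$, $z(q)=\infty$, $z(r)=1$. *)

theory Defs
  imports "HOL-Analysis.Analysis" "HOL-Computational_Algebra.Computational_Algebra"
begin

text \<open>The Riemann sphere is modelled as \<open>complex option\<close>: \<open>Some z\<close> is the
  point z of the complex plane and \<open>None\<close> is the point at infinity.\<close>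

type_synonym csphere = "complex option"

definition moebius :: "complex \<Rightarrow> complex \<Rightarrow> complex \<Rightarrow> complex \<Rightarrow> csphere \<Rightarrow> csphere" where
  "moebius a b c d x = (case x of
      Some z \<Rightarrow> (if c * z + d = 0 then None else Some ((a * z + b) / (c * z + d)))
    | None \<Rightarrow> (if c = 0 then None else Some (a / c)))"

definition is_moebius :: "(csphere \<Rightarrow> csphere) \<Rightarrow> bool" where
  "is_moebius g \<longleftrightarrow> (\<exists>a b c d. a * d - b * c \<noteq> 0 \<and> g = moebius a b c d)"

definition cross_ratio :: "csphere \<Rightarrow> csphere \<Rightarrow> csphere \<Rightarrow> csphere \<Rightarrow> csphere" where
  "cross_ratio p q r s =
     (THE g. is_moebius g \<and> g p = Some 0 \<and> g q = None \<and> g r = Some 1) s"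

definition rat_map :: "complex poly \<Rightarrow> complex poly \<Rightarrow> csphere \<Rightarrow> csphere" where
  "rat_map P Q x = (case x of
      Some z \<Rightarrow> (if poly Q z = 0 then None else Some (poly P z / poly Q z))
    | None \<Rightarrow> (if degree P < degree Q then Some 0
               else if degree Q < degree P then None
               else Some (lead_coeff P / lead_coeff Q)))"

definition quadratic_rational_map :: "(csphere \<Rightarrow> csphere) \<Rightarrow> bool" where
  "quadratic_rational_map f \<longleftrightarrow>
     (\<exists>P Q. coprime P Q \<and> max (degree P) (degree Q) = 2 \<and> f = rat_map P Q)"

definition chart_in :: "csphere \<Rightarrow> complex \<Rightarrow> csphere" where
  "chart_in c t = (case c of
      Some a \<Rightarrow> Some (a + t)
    | None \<Rightarrow> (if t = 0 then None else Some (1 / t)))"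

definition chart_out :: "csphere \<Rightarrow> csphere \<Rightarrow> complex" where
  "chart_out v w = (case v of
      Some b \<Rightarrow> (case w of Some y \<Rightarrow> y - b | None \<Rightarrow> 0)
    | None \<Rightarrow> (case w of None \<Rightarrow> 0 | Some y \<Rightarrow> 1 / y))"

definition critical_point :: "(csphere \<Rightarrow> csphere) \<Rightarrow> csphere \<Rightarrow> bool" where
  "critical_point f c \<longleftrightarrow>
     ((\<lambda>t. chart_out (f c) (f (chart_in c t))) has_field_derivative 0) (at 0)"

end

theory Submission
  imports Defs
begin


definition pj :: "complex \<Rightarrow> complex \<Rightarrow> csphere" where
  "pj x y = (if y = 0 then None else Some (x / y))"
definition l0 :: "csphere \<Rightarrow> complex" where "l0 p = (case p of Some z \<Rightarrow> z | None \<Rightarrow> 1)"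
definition l1 :: "csphere \<Rightarrow> complex" where "l1 p = (case p of Some z \<Rightarrow> 1 | None \<Rightarrow> 0)"
definition hm :: "complex poly \<Rightarrow> complex \<Rightarrow> complex \<Rightarrow> complex" where
  "hm P x y = coeff P 0 * y^2 + coeff P 1 * x * y + coeff P 2 * x^2"

lemma pj_lift: "pj (l0 p) (l1 p) = p"
  by (cases p) (auto simp: pj_def l0_def l1_def)
lemma lift_nz: "l0 p \<noteq> 0 \<or> l1 p \<noteq> 0"
  by (cases p) (auto simp: l0_def l1_def)

lemma pj_eq_iff:
  assumes "x \<noteq> 0 \<or> y \<noteq> 0" "u \<noteq> 0 \<or> v \<noteq> 0"
  shows "pj x y = pj u v \<longleftrightarrow> x * v = y * u"
  using assms by (auto simp: pj_def field_simps)

lemma pj_scale: "s \<noteq> 0 \<Longrightarrow> pj (s*x) (s*y) = pj x y"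
  by (auto simp: pj_def)

lemma poly_deg2:
  fixes P :: "complex poly"
  assumes "degree P \<le> 2"
  shows "poly P z = coeff P 0 + coeff P 1 * z + coeff P 2 * z^2"
proof -
  have "poly P z = (\<Sum>i\<le>2. coeff P i * z ^ i)"
    unfolding poly_altdef
    by (rule sum.mono_neutral_left) (use assms in \<open>auto simp: coeff_eq_0\<close>)
  also have "\<dots> = coeff P 0 + coeff P 1 * z + coeff P 2 * z^2"
    by (simp add: numeral_2_eq_2)
  finally show ?thesis .
qed

lemma hm_poly: "degree P \<le> 2 \<Longrightarrow> y \<noteq> 0 \<Longrightarrow> hm P x y = y^2 * poly P (x/y)"
  by (simp add: poly_deg2 hm_def field_simps power2_eq_square)

lemma no_common_root:
  fixes P Q :: "complex poly"
  assumes "coprime P Q" "poly P z = 0" "poly Q z = 0"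
  shows False
proof -
  have "is_unit [:-z,1:]"
    using coprime_common_divisor[OF assms(1)] assms(2,3) by (simp add: poly_eq_0_iff_dvd)
  then show False
    using is_unit_iff_degree[of "[:-z,1:]"] by simp
qed

locale qm =
  fixes P Q :: "complex poly"
  assumes cop: "coprime P Q" and deg: "max (degree P) (degree Q) = 2"
begin

lemma degP: "degree P \<le> 2" and degQ: "degree Q \<le> 2" using deg by auto

lemma rat_map_pj:
  assumes "x \<noteq> 0 \<or> y \<noteq> 0"
  shows "rat_map P Q (pj x y) = pj (hm P x y) (hm Q x y)"
    and "hm P x y \<noteq> 0 \<or> hm Q x y \<noteq> 0"
proof -
  have "rat_map P Q (pj x y) = pj (hm P x y) (hm Q x y) \<and> (hm P x y \<noteq> 0 \<or> hm Q x y \<noteq> 0)"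
  proof (cases "y = 0")
    case False
    have nc: "poly P (x/y) \<noteq> 0 \<or> poly Q (x/y) \<noteq> 0" using no_common_root[OF cop] by blast
    have "pj (hm P x y) (hm Q x y) = pj (poly P (x/y)) (poly Q (x/y))"
      using pj_scale[of "y^2"] False by (simp add: hm_poly degP degQ)
    then show ?thesis using False nc
      by (auto simp: pj_def rat_map_def hm_poly degP degQ)
  next
    case True
    then have x: "x \<noteq> 0" using assms by auto
    have hmP: "hm P x 0 = x^2 * coeff P 2" and hmQ: "hm Q x 0 = x^2 * coeff Q 2"
      by (simp_all add: hm_def)
    have "P \<noteq> 0 \<or> Q \<noteq> 0" using deg by auto
    consider "degree P < degree Q" | "degree Q < degree P" | "degree P = degree Q" by linarith
    then show ?thesis
    proof cases
      case 1
      then have "degree Q = 2" "degree P < 2" using deg by auto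
      then have "coeff Q 2 \<noteq> 0" "coeff P 2 = 0"
        using leading_coeff_neq_0[of Q] coeff_eq_0[of P 2] by fastforce+
      then show ?thesis using 1 True x by (simp add: hmP hmQ pj_def rat_map_def)
    next
      case 2
      then have "degree P = 2" "degree Q < 2" using deg by auto
      then have "coeff P 2 \<noteq> 0" "coeff Q 2 = 0"
        using leading_coeff_neq_0[of P] coeff_eq_0[of Q 2] by fastforce+
      then show ?thesis using 2 True x by (simp add: hmP hmQ pj_def rat_map_def)
    next
      case 3
      then have "degree P = 2" "degree Q = 2" using deg by auto
      then have "coeff P 2 \<noteq> 0" "coeff Q 2 \<noteq> 0"
        using leading_coeff_neq_0[of P] leading_coeff_neq_0[of Q] by fastforce+
      then show ?thesis using 3 True x \<open>degree P = 2\<close> \<open>degree Q = 2\<close>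
        by (simp add: hmP hmQ pj_def rat_map_def)
    qed
  qed
  then show "rat_map P Q (pj x y) = pj (hm P x y) (hm Q x y)" "hm P x y \<noteq> 0 \<or> hm Q x y \<noteq> 0"
    by auto
qed

lemma indep:
  assumes "a \<noteq> 0 \<or> b \<noteq> 0" "\<And>x y. b * hm P x y - a * hm Q x y = 0"
  shows False
proof -
  have c: "b * coeff P n = a * coeff Q n" for n
  proof -
    consider "n = 0" | "n = 1" | "n = 2" | "n > 2" by linarith
    then show ?thesis
    proof cases
      case 1 then show ?thesis using assms(2)[of 0 1] by (simp add: hm_def)
    next
      case 3 then show ?thesis using assms(2)[of 1 0] by (simp add: hm_def)
    next
      case 2 then show ?thesis using assms(2)[of 1 1] assms(2)[of 0 1] assms(2)[of 1 0]
        by (simp add: hm_def algebra_simps)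
    next
      case 4 then show ?thesis using degP degQ by (simp add: coeff_eq_0)
    qed
  qed
  then have e: "smult b P = smult a Q" by (simp add: poly_eq_iff)
  show False
  proof (cases "b = 0")
    case True
    then have "Q = 0" using e assms(1) by simp
    then have "is_unit P" using cop by simp
    then have "degree P = 0" using is_unit_iff_degree[of P] by fastforce
    then show False using deg \<open>Q = 0\<close> by simp
  next
    case False
    have "smult (1/b) (smult b P) = smult (1/b) (smult a Q)" using e by simp
    then have "P = smult (a/b) Q" using False by simp
    then have "Q dvd P" by (metis dvd_smult dvd_refl)
    then have "is_unit Q" using cop coprime_absorb_right by blast
    then have "degree Q = 0" "Q \<noteq> 0" using is_unit_iff_degree[of Q] by fastforce+
    then show False using deg \<open>P = smult (a/b) Q\<close> by (simp split: if_splits)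
  qed
qed

end



definition cr :: "complex \<Rightarrow> complex \<Rightarrow> complex \<Rightarrow> complex \<Rightarrow> complex" where
  "cr x0 x1 y0 y1 = x0 * y1 - x1 * y0"

lemma moebius_pj:
  assumes "a * d - b * c \<noteq> 0" "x \<noteq> 0 \<or> y \<noteq> 0"
  shows "moebius a b c d (pj x y) = pj (a*x+b*y) (c*x+d*y)"
    and "a*x+b*y \<noteq> 0 \<or> c*x+d*y \<noteq> 0"
proof -
  show nz: "a*x+b*y \<noteq> 0 \<or> c*x+d*y \<noteq> 0"
  proof (rule ccontr)
    assume "\<not> ?thesis"
    then have "a*x+b*y = 0" "c*x+d*y = 0" by auto
    moreover have "(a*d - b*c) * x = d*(a*x+b*y) - b*(c*x+d*y)" "(a*d-b*c)*y = a*(c*x+d*y) - c*(a*x+b*y)"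
      by (simp_all add: algebra_simps)
    ultimately have "(a*d - b*c) * x = 0" "(a*d-b*c)*y = 0" by simp_all
    then show False using assms by auto
  qed
  show "moebius a b c d (pj x y) = pj (a*x+b*y) (c*x+d*y)"
  proof (cases "y = 0")
    case True
    then have "x \<noteq> 0" using assms by auto
    then show ?thesis using True by (auto simp: moebius_def pj_def)
  next
    case False
    have e: "c*x+d*y = y * (c*(x/y)+d)" "a*x+b*y = y * (a*(x/y)+b)" using False by (auto simp: field_simps)
    show ?thesis using False pj_scale[of y] unfolding e by (auto simp: moebius_def pj_def)
  qed
qed

lemma pj_some0: "pj u v = Some 0 \<longleftrightarrow> v \<noteq> 0 \<and> u = 0"
  by (auto simp: pj_def)
lemma pj_none: "pj u v = None \<longleftrightarrow> v = 0"
  by (auto simp: pj_def)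
lemma pj_some1: "pj u v = Some 1 \<longleftrightarrow> v \<noteq> 0 \<and> u = v"
  by (auto simp: pj_def)

lemma cr_key:
  fixes a b c d p0 p1 q0 q1 r0 r1 w0 w1 :: complex
  assumes "a*p0 + b*p1 = 0" "c*q0 + d*q1 = 0" "a*r0+b*r1 = c*r0+d*r1" "cr p0 p1 q0 q1 \<noteq> 0"
  shows "(a*w0+b*w1) * (cr w0 w1 q0 q1 * cr p0 p1 r0 r1) = (c*w0+d*w1) * (cr p0 p1 w0 w1 * cr r0 r1 q0 q1)"
proof -
  have "cr p0 p1 q0 q1 * ((a*w0+b*w1) * (cr w0 w1 q0 q1 * cr p0 p1 r0 r1) - (c*w0+d*w1) * (cr p0 p1 w0 w1 * cr r0 r1 q0 q1)) = 0"
    using assms(1-3) unfolding cr_def by algebra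
  then show ?thesis using assms(4) by simp
qed

lemma T_nz:
  assumes "cr p0 p1 q0 q1 \<noteq> 0" "cr r0 r1 q0 q1 \<noteq> 0" "cr p0 p1 r0 r1 \<noteq> 0" "w0 \<noteq> 0 \<or> w1 \<noteq> 0"
  shows "cr p0 p1 w0 w1 * cr r0 r1 q0 q1 \<noteq> 0 \<or> cr w0 w1 q0 q1 * cr p0 p1 r0 r1 \<noteq> 0"
proof (rule ccontr)
  assume "\<not> ?thesis"
  then have "cr p0 p1 w0 w1 = 0" "cr w0 w1 q0 q1 = 0" using assms by auto
  then have "cr p0 p1 q0 q1 * w0 = 0" "cr p0 p1 q0 q1 * w1 = 0" unfolding cr_def by algebra+
  then show False using assms by auto
qed

lemma cross_ratio_pj:
  assumes "p0 \<noteq> 0 \<or> p1 \<noteq> 0" "q0 \<noteq> 0 \<or> q1 \<noteq> 0" "r0 \<noteq> 0 \<or> r1 \<noteq> 0" "s0 \<noteq> 0 \<or> s1 \<noteq> 0"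
    "cr p0 p1 q0 q1 \<noteq> 0" "cr r0 r1 q0 q1 \<noteq> 0" "cr p0 p1 r0 r1 \<noteq> 0"
  shows "cross_ratio (pj p0 p1) (pj q0 q1) (pj r0 r1) (pj s0 s1) =
     pj (cr p0 p1 s0 s1 * cr r0 r1 q0 q1) (cr s0 s1 q0 q1 * cr p0 p1 r0 r1)"
proof -
  define k1 where "k1 = cr r0 r1 q0 q1"
  define k2 where "k2 = cr p0 p1 r0 r1"
  define g0 where "g0 = moebius (-k1*p1) (k1*p0) (k2*q1) (-k2*q0)"
  have det: "(-k1*p1) * (-k2*q0) - (k1*p0) * (k2*q1) \<noteq> 0"
  proof -
    have "(-k1*p1) * (-k2*q0) - (k1*p0) * (k2*q1) = - (k1*k2*cr p0 p1 q0 q1)"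
      unfolding cr_def by (simp add: algebra_simps)
    then show ?thesis using assms(5-7) unfolding k1_def k2_def by simp
  qed
  have g0: "g0 (pj w0 w1) = pj (cr p0 p1 w0 w1 * k1) (cr w0 w1 q0 q1 * k2)" if "w0 \<noteq> 0 \<or> w1 \<noteq> 0" for w0 w1
  proof -
    have "g0 (pj w0 w1) = pj (-k1*p1*w0 + k1*p0*w1) (k2*q1*w0 + -k2*q0*w1)"
      unfolding g0_def by (rule moebius_pj(1)[OF det that])
    also have "\<dots> = pj (cr p0 p1 w0 w1 * k1) (cr w0 w1 q0 q1 * k2)"
      by (rule arg_cong2[where f=pj]) (simp_all add: cr_def algebra_simps)
    finally show ?thesis .
  qed
  let ?\<Phi> = "\<lambda>g. is_moebius g \<and> g (pj p0 p1) = Some 0 \<and> g (pj q0 q1) = None \<and> g (pj r0 r1) = Some 1"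
  have "?\<Phi> g0"
  proof (intro conjI)
    show "is_moebius g0" unfolding is_moebius_def g0_def using det by blast
    show "g0 (pj p0 p1) = Some 0" using g0[OF assms(1)] assms(5-7) by (simp add: pj_def cr_def k1_def k2_def)
    show "g0 (pj q0 q1) = None" using g0[OF assms(2)] by (simp add: pj_def cr_def)
    have "g0 (pj r0 r1) = pj (k2 * k1) (k1 * k2)"
      using g0[OF assms(3)] by (simp add: cr_def k1_def k2_def algebra_simps)
    then show "g0 (pj r0 r1) = Some 1" using assms(6,7) by (simp add: pj_def k1_def k2_def)
  qed
  moreover have "g = g0" if phi: "?\<Phi> g" for g
  proof
    fix x
    obtain a b c d where dt: "a*d-b*c \<noteq> 0" and g: "g = moebius a b c d"
      using phi unfolding is_moebius_def by blast
    have h1: "a*p0 + b*p1 = 0" using phi moebius_pj[OF dt assms(1)] g by (simp add: pj_some0)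
    have h2: "c*q0 + d*q1 = 0" using phi moebius_pj[OF dt assms(2)] g by (simp add: pj_none)
    have h3: "a*r0+b*r1 = c*r0+d*r1" using phi moebius_pj[OF dt assms(3)] g by (simp add: pj_some1)
    have "g x = g (pj (l0 x) (l1 x))" by (simp add: pj_lift)
    also have "\<dots> = pj (a*l0 x+b*l1 x) (c*l0 x+d*l1 x)" using g moebius_pj[OF dt lift_nz] by simp
    also have "\<dots> = pj (cr p0 p1 (l0 x) (l1 x) * k1) (cr (l0 x) (l1 x) q0 q1 * k2)"
      apply (subst pj_eq_iff)
      using moebius_pj(2)[OF dt lift_nz] apply blast
      using T_nz[OF assms(5-7) lift_nz] apply (simp add: k1_def k2_def)
      using cr_key[OF h1 h2 h3 assms(5), of "l0 x" "l1 x"] by (simp add: k1_def k2_def)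
    also have "\<dots> = g0 x" using g0[OF lift_nz, of x] by (simp add: pj_lift)
    finally show "g x = g0 x" .
  qed
  ultimately have "(THE g. ?\<Phi> g) = g0" by (rule the_equality)
  then show ?thesis unfolding cross_ratio_def using g0[OF assms(4)] by (simp add: k1_def k2_def)
qed




definition pol :: "complex poly \<Rightarrow> complex \<Rightarrow> complex \<Rightarrow> complex \<Rightarrow> complex \<Rightarrow> complex" where
  "pol P xa ya ua va = coeff P 0 * (2*ya* va) + coeff P 1 * (ua*ya + xa* va) + coeff P 2 * (2*xa*ua)"

lemma hm_deriv: "((\<lambda>t. hm P (x+t*u) (y+t* v)) has_field_derivative pol P x y u v) (at 0)"
proof -
  have "((\<lambda>t. hm P (x+t*u) (y+t* v)) has_field_derivative
     coeff P 0 * (2*(y+0* v)* v) + coeff P 1 * (u*(y+0* v) + (x+0*u)* v) + coeff P 2 * (2*(x+0*u)*u)) (at 0)"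
    unfolding hm_def
    by (rule derivative_eq_intros refl | simp add: power2_eq_square algebra_simps)+
  then show ?thesis by (simp add: pol_def)
qed

lemma quad_form:
  fixes g0 g1 g2 c0 c1 d0 d1 w0 w1 :: complex
  assumes "g0*c1^2 + g1*c0*c1 + g2*c0^2 = 0"
    "g0 * (2*c1*d1) + g1 * (d0*c1 + c0*d1) + g2 * (2*c0*d0) = 0"
  shows "(g0*w1^2 + g1*w0*w1 + g2*w0^2) * (cr c0 c1 d0 d1)^2 = (g0*d1^2 + g1*d0*d1 + g2*d0^2) * (cr c0 c1 w0 w1)^2"
  using assms unfolding cr_def by algebra

lemma chart_in_pj: "chart_in c t = pj (l0 c + t * l1 c) (l1 c + t * (1 - l1 c))"
  by (cases c) (auto simp: chart_in_def pj_def l0_def l1_def)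

lemma chart_nz: "l0 c + t * l1 c \<noteq> 0 \<or> l1 c + t * (1 - l1 c) \<noteq> 0"
  by (cases c) (auto simp: l0_def l1_def)

lemma cr_cd: "(cr (l0 c) (l1 c) (l1 c) (1 - l1 c))^2 = 1"
  by (cases c) (auto simp: l0_def l1_def cr_def)

context qm begin

lemma crit_W:
  assumes "critical_point (rat_map P Q) c"
  defines "C0 \<equiv> l0 c" and "C1 \<equiv> l1 c" and "d0 \<equiv> l1 c" and "d1 \<equiv> 1 - l1 c"
  shows "pol P C0 C1 d0 d1 * hm Q C0 C1 - hm P C0 C1 * pol Q C0 C1 d0 d1 = 0"
proof -
  define p where "p t = hm P (C0 + t*d0) (C1 + t*d1)" for t
  define q where "q t = hm Q (C0 + t*d0) (C1 + t*d1)" for t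
  define a where "a = hm P C0 C1"
  define b where "b = hm Q C0 C1"
  have fc: "\<And>t. rat_map P Q (chart_in c t) = pj (p t) (q t)"
    unfolding chart_in_pj p_def q_def C0_def C1_def d0_def d1_def using rat_map_pj(1)[OF chart_nz] by simp
  have fc0: "rat_map P Q c = pj a b"
    using fc[of 0] unfolding a_def b_def p_def q_def by (simp add: chart_in_def split: option.splits)
  have ab: "a \<noteq> 0 \<or> b \<noteq> 0" unfolding a_def b_def C0_def C1_def by (rule rat_map_pj(2)[OF lift_nz])
  have dp: "(p has_field_derivative pol P C0 C1 d0 d1) (at 0)" unfolding p_def by (rule hm_deriv)
  have dq: "(q has_field_derivative pol Q C0 C1 d0 d1) (at 0)" unfolding q_def by (rule hm_deriv)
  have p0: "p 0 = a" and q0: "q 0 = b" by (simp_all add: p_def q_def a_def b_def)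
  have crit: "((\<lambda>t. chart_out (pj a b) (pj (p t) (q t))) has_field_derivative 0) (at 0)"
    using assms(1) unfolding critical_point_def fc fc0 .
  show ?thesis
  proof (cases "b = 0")
    case True
    then have a: "a \<noteq> 0" using ab by simp
    have e: "(\<lambda>t. chart_out (pj a b) (pj (p t) (q t))) = (\<lambda>t. q t / p t)"
      using True by (auto simp: chart_out_def pj_def)
    have "((\<lambda>t. q t / p t) has_field_derivative
          (pol Q C0 C1 d0 d1 * p 0 - q 0 * pol P C0 C1 d0 d1) / (p 0 * p 0)) (at 0)"
      by (rule DERIV_divide[OF dq dp]) (simp add: p0 a)
    then have "(pol Q C0 C1 d0 d1 * p 0 - q 0 * pol P C0 C1 d0 d1) / (p 0 * p 0) = 0"
      using crit unfolding e by (rule DERIV_unique)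
    then show ?thesis using True a by (simp add: p0 q0 a_def[symmetric] b_def[symmetric])
  next
    case False
    have "isCont q 0" using dq by (rule DERIV_isCont)
    then have "eventually (\<lambda>t. q t \<noteq> 0) (nhds 0)"
      using False q0 tendsto_imp_eventually_ne[of q "q 0" "nhds 0" 0]
      unfolding isCont_def tendsto_at_iff_tendsto_nhds by simp
    then have ev: "eventually (\<lambda>t. chart_out (pj a b) (pj (p t) (q t)) = p t / q t - a / b) (nhds 0)"
      by eventually_elim (use False in \<open>auto simp: chart_out_def pj_def\<close>)
    have "((\<lambda>t. p t / q t - a / b) has_field_derivative
          (pol P C0 C1 d0 d1 * q 0 - p 0 * pol Q C0 C1 d0 d1) / (q 0 * q 0) - 0) (at 0)"
      by (rule derivative_eq_intros DERIV_divide[OF dp dq] | simp add: q0 False)+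
    moreover have "((\<lambda>t. p t / q t - a / b) has_field_derivative 0) (at 0)"
      using crit DERIV_cong_ev[OF refl ev refl] by blast
    ultimately have "(pol P C0 C1 d0 d1 * q 0 - p 0 * pol Q C0 C1 d0 d1) / (q 0 * q 0) - 0 = 0"
      by (rule DERIV_unique)
    then show ?thesis using False by (simp add: p0 q0 a_def[symmetric] b_def[symmetric])
  qed
qed

lemma crit_form:
  assumes "critical_point (rat_map P Q) c"
  shows "\<exists>k. k \<noteq> 0 \<and> (\<forall>x y. hm Q (l0 c) (l1 c) * hm P x y - hm P (l0 c) (l1 c) * hm Q x y
              = k * (cr (l0 c) (l1 c) x y)^2)"
proof -
  define a where "a = hm P (l0 c) (l1 c)"
  define b where "b = hm Q (l0 c) (l1 c)"
  define g where "g i = b * coeff P i - a * coeff Q i" for i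
  have gform: "b * hm P x y - a * hm Q x y = g 0 * y^2 + g 1 * x * y + g 2 * x^2" for x y
    unfolding g_def hm_def by (simp add: algebra_simps)
  have W: "pol P (l0 c) (l1 c) (l1 c) (1 - l1 c) * b - a * pol Q (l0 c) (l1 c) (l1 c) (1 - l1 c) = 0"
    using crit_W[OF assms] unfolding a_def b_def .
  have h1: "g 0 * (l1 c)^2 + g 1 * (l0 c) * (l1 c) + g 2 * (l0 c)^2 = 0"
    using gform[of "l0 c" "l1 c"] unfolding a_def b_def by (simp add: mult.commute)
  have h2: "g 0 * (2*(l1 c)*(1 - l1 c)) + g 1 * ((l1 c)*(l1 c) + (l0 c)*(1 - l1 c)) + g 2 * (2*(l0 c)*(l1 c)) = 0"
    using W unfolding g_def pol_def by (simp add: algebra_simps)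
  define k where "k = g 0 * (1 - l1 c)^2 + g 1 * (l1 c) * (1 - l1 c) + g 2 * (l1 c)^2"
  have id: "b * hm P x y - a * hm Q x y = k * (cr (l0 c) (l1 c) x y)^2" for x y
    using quad_form[OF h1 h2, of y x] unfolding gform k_def cr_cd by simp
  have "k \<noteq> 0"
  proof
    assume "k = 0"
    then show False
      using indep[of a b] id rat_map_pj(2)[OF lift_nz, of c] unfolding a_def b_def by auto
  qed
  then show ?thesis using id unfolding a_def b_def by blast
qed

end



lemma E1:
  fixes x e :: complex
  assumes "x \<noteq> 1" "x*(x+e)^2 = (x-e)^2" "x*(1+e)^2 = (1-e)^2"
  shows "x \<in> {-1, 3 + 2 * of_real (sqrt 2), 3 - 2 * of_real (sqrt 2)}"
proof -
  have "(x-1)*(x+1)*(2*e+x-1) = 0" using assms(2,3) by algebra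
  then have "x - 1 = 0 \<or> x + 1 = 0 \<or> 2*e+x-1 = 0" by simp
  then have "x = -1 \<or> 2*e = 1 - x" using assms(1) by (auto simp: algebra_simps add_eq_0_iff)
  then show ?thesis
  proof
    assume "x = -1" then show ?thesis by simp
  next
    assume h: "2*e = 1 - x"
    have "(x-1)*(x^2-6*x+1) = 0" using assms(3) h by algebra
    then have "x^2-6*x+1 = 0" using assms(1) by simp
    then have "(x-3)^2 = (2 * of_real (sqrt 2))^2"
      by (simp add: power2_eq_square algebra_simps flip: of_real_mult)
    then have "x - 3 = 2 * of_real (sqrt 2) \<or> x - 3 = - (2 * of_real (sqrt 2))"
      using power2_eq_iff[of "x-3" "2 * of_real (sqrt 2)"] by blast
    then show ?thesis by (auto simp: algebra_simps)
  qed
qed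

lemma E2:
  fixes k1 k2 r1 s1 r2 s2 x0 x1 y0 y1 :: complex
  assumes nz: "k1 \<noteq> 0" "k2 \<noteq> 0" "x0 \<noteq> 0" "x1 \<noteq> 0" "y0 \<noteq> 0" "y1 \<noteq> 0"
    and ind: "r1* s2 - r2* s1 \<noteq> 0" and xy: "x0*y1 - x1*y0 \<noteq> 0"
    and h1: "k1* s1^2*y1 = k2* s2^2*y0"
    and h2: "k1*r1^2*y1 = k2*r2^2*y0"
    and h3: "k1*(r1*y0+s1*y1)^2*x1 = k2*(r2*y0+s2*y1)^2*x0"
    and h4: "k1*(r1*x0+s1*x1)^2*x1 = k2*(r2*x0+s2*x1)^2*x0"
  shows "y0*x1/(y1*x0) \<in> {-1, 3 + 2 * of_real (sqrt 2), 3 - 2 * of_real (sqrt 2)}"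
proof -
  have "k1*y1*((s1*r2)^2 - (r1* s2)^2) = 0"
  proof -
    have "k1*y1*(s1*r2)^2 = (k1* s1^2*y1)*r2^2" by (simp add: algebra_simps power2_eq_square)
    also have "\<dots> = s2^2 * (k2*r2^2*y0)" unfolding h1 by (simp add: algebra_simps)
    also have "\<dots> = k1*y1*(r1* s2)^2" unfolding h2[symmetric] by (simp add: algebra_simps power2_eq_square)
    finally show ?thesis by (simp add: algebra_simps)
  qed
  then have "(s1*r2 - r1* s2)*(s1*r2 + r1* s2) = 0" using nz by (simp add: algebra_simps power2_eq_square)
  moreover have "s1*r2 - r1* s2 \<noteq> 0" using ind by (simp add: algebra_simps)
  ultimately have sr: "s1*r2 = - (r1* s2)" by (simp add: add_eq_0_iff)
  have r1: "r1 \<noteq> 0"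
  proof
    assume "r1 = 0" then have "s1 \<noteq> 0" "r2 \<noteq> 0 \<or> True" using ind by auto
    then show False using sr ind \<open>r1 = 0\<close> by auto
  qed
  have r2: "r2 \<noteq> 0"
  proof
    assume "r2 = 0" then have "r1* s2 = 0" using sr by simp
    then show False using r1 ind \<open>r2 = 0\<close> by auto
  qed
  define a where "a = x0/x1"
  define b where "b = y0/y1"
  define c where "c = s1/r1"
  have x0e: "x0 = a*x1" and y0e: "y0 = b*y1" and s1e: "s1 = c*r1" and s2e: "s2 = -(c*r2)"
    using nz r1 r2 sr unfolding a_def b_def c_def by (auto simp: field_simps)
  have a0: "a \<noteq> 0" and b0: "b \<noteq> 0" using nz x0e y0e by auto
  have k: "k1*r1^2 = k2*r2^2*b" using h2 nz unfolding y0e by (simp add: field_simps)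
  have e3: "k1*r1^2*y1^2*(b+c)^2*x1 = k2*r2^2*y1^2*(b-c)^2*(a*x1)"
    using h3 unfolding x0e y0e s1e s2e by (simp add: algebra_simps power2_eq_square)
  have "(k2*r2^2*y1^2*x1) * (b*(b+c)^2) = (k2*r2^2*y1^2*x1) * ((b-c)^2*a)"
    using e3 unfolding k by (simp add: algebra_simps power2_eq_square)
  then have e3': "b*(b+c)^2 = (b-c)^2*a" using nz r2 by simp
  have e4: "k1*r1^2*x1^2*(a+c)^2*x1 = k2*r2^2*x1^2*(a-c)^2*(a*x1)"
    using h4 unfolding x0e s1e s2e by (simp add: algebra_simps power2_eq_square)
  have "(k2*r2^2*x1^3) * (b*(a+c)^2) = (k2*r2^2*x1^3) * ((a-c)^2*a)"
    using e4 unfolding k by (simp add: algebra_simps power2_eq_square power3_eq_cube)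
  then have e4': "b*(a+c)^2 = (a-c)^2*a" using nz r2 by simp
  have ab: "b/a \<noteq> 1" using xy a0 unfolding x0e y0e by (auto simp: field_simps)
  have q1a: "(b/a)*((b/a)+(c/a))^2 = (b*(b+c)^2)/a^3" using a0 by (simp add: field_simps power2_eq_square power3_eq_cube)
  have q1b: "((b/a)-(c/a))^2 = ((b-c)^2*a)/a^3" using a0 by (simp add: field_simps power2_eq_square power3_eq_cube)
  have q1: "(b/a)*((b/a)+(c/a))^2 = ((b/a)-(c/a))^2" unfolding q1a q1b e3' ..
  have q2a: "(b/a)*(1+(c/a))^2 = (b*(a+c)^2)/a^3" using a0 by (simp add: field_simps power2_eq_square power3_eq_cube)
  have q2b: "(1-(c/a))^2 = ((a-c)^2*a)/a^3" using a0 by (simp add: field_simps power2_eq_square power3_eq_cube)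
  have q2: "(b/a)*(1+(c/a))^2 = (1-(c/a))^2" unfolding q2a q2b e4' ..
  have "y0*x1/(y1*x0) = b/a" unfolding x0e y0e using nz by (simp add: field_simps)
  then show ?thesis using E1[OF ab q1 q2] by simp
qed



lemma transfer_eq:
  assumes "FP*W1 = FQ*W0"
  shows "(b1*FP - a1*FQ) * cr W0 W1 a2 b2 = (b2*FP - a2*FQ) * cr W0 W1 a1 b1"
proof -
  have "(b1*FP - a1*FQ) * cr W0 W1 a2 b2 - (b2*FP - a2*FQ) * cr W0 W1 a1 b1 = cr a1 b1 a2 b2 * (FP*W1 - FQ*W0)"
    unfolding cr_def by (simp add: algebra_simps)
  then show ?thesis using assms by simp
qed

lemma lin_id: "(C1*a2 - C0*b2) * cr W0 W1 a1 b1 + (C0*b1 - C1*a1) * cr W0 W1 a2 b2 = cr a1 b1 a2 b2 * cr C0 C1 W0 W1"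
  unfolding cr_def by (simp add: algebra_simps)

lemma ind_id: "(C11*a2 - C10*b2)*(C20*b1 - C21*a1) - (C21*a2 - C20*b2)*(C10*b1 - C11*a1) = cr a1 b1 a2 b2 * cr C10 C11 C20 C21"
  unfolding cr_def by (simp add: algebra_simps)

lemma xy_id: "cr A0 A1 a1 b1 * cr B0 B1 a2 b2 - cr A0 A1 a2 b2 * cr B0 B1 a1 b1 = cr a1 b1 a2 b2 * cr A0 A1 B0 B1"
  unfolding cr_def by (simp add: algebra_simps)

lemma pj_ne_cr: "x0 \<noteq> 0 \<or> x1 \<noteq> 0 \<Longrightarrow> y0 \<noteq> 0 \<or> y1 \<noteq> 0 \<Longrightarrow> pj x0 x1 \<noteq> pj y0 y1 \<Longrightarrow> cr x0 x1 y0 y1 \<noteq> 0"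
  using pj_eq_iff[of x0 x1 y0 y1] by (auto simp: cr_def algebra_simps)

theorem mainTheorem18:
  fixes f :: "csphere \<Rightarrow> csphere" and c1 c2 v1 v2 \<alpha> \<beta> :: csphere
  assumes "quadratic_rational_map f"
    and "c1 \<noteq> c2" and "critical_point f c1" and "critical_point f c2"
    and "v1 = f c1" and "v2 = f c2"
    and "f v1 = \<beta>" and "f v2 = \<beta>" and "f \<beta> = \<alpha>" and "f \<alpha> = \<alpha>"
    and "\<alpha> \<noteq> \<beta>"
  shows "cross_ratio v1 v2 \<alpha> \<beta> \<in> Some ` {-1, 3 + 2 * sqrt 2, 3 - 2 * sqrt 2}"
proof -
  obtain P Q where "coprime P Q" "max (degree P) (degree Q) = 2" and f: "f = rat_map P Q"
    using assms(1) unfolding quadratic_rational_map_def by blast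
  then interpret qm P Q by unfold_locales
  note rm = rat_map_pj
  define a1 where "a1 = hm P (l0 c1) (l1 c1)"
  define b1 where "b1 = hm Q (l0 c1) (l1 c1)"
  define a2 where "a2 = hm P (l0 c2) (l1 c2)"
  define b2 where "b2 = hm Q (l0 c2) (l1 c2)"
  have v1: "v1 = pj a1 b1" using assms(5) rm(1)[OF lift_nz, of c1] unfolding f a1_def b1_def pj_lift by simp
  have v2: "v2 = pj a2 b2" using assms(6) rm(1)[OF lift_nz, of c2] unfolding f a2_def b2_def pj_lift by simp
  have nz1: "a1 \<noteq> 0 \<or> b1 \<noteq> 0" unfolding a1_def b1_def by (rule rm(2)[OF lift_nz])
  have nz2: "a2 \<noteq> 0 \<or> b2 \<noteq> 0" unfolding a2_def b2_def by (rule rm(2)[OF lift_nz])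
  obtain k1 where k1: "k1 \<noteq> 0" and I1: "\<And>x y. b1 * hm P x y - a1 * hm Q x y = k1 * (cr (l0 c1) (l1 c1) x y)^2"
    using crit_form[of c1] assms(3) unfolding f a1_def b1_def by blast
  obtain k2 where k2: "k2 \<noteq> 0" and I2: "\<And>x y. b2 * hm P x y - a2 * hm Q x y = k2 * (cr (l0 c2) (l1 c2) x y)^2"
    using crit_form[of c2] assms(4) unfolding f a2_def b2_def by blast
  define A0 where "A0 = l0 \<alpha>"
  define A1 where "A1 = l1 \<alpha>"
  define B0 where "B0 = l0 \<beta>"
  define B1 where "B1 = l1 \<beta>"
  have al: "\<alpha> = pj A0 A1" and be: "\<beta> = pj B0 B1" unfolding A0_def A1_def B0_def B1_def pj_lift by simp_all
  have nzA: "A0 \<noteq> 0 \<or> A1 \<noteq> 0" and nzB: "B0 \<noteq> 0 \<or> B1 \<noteq> 0"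
    unfolding A0_def A1_def B0_def B1_def by (rule lift_nz)+
  have c12: "cr (l0 c1) (l1 c1) (l0 c2) (l1 c2) \<noteq> 0"
    by (rule pj_ne_cr[OF lift_nz lift_nz]) (use assms(2) in \<open>simp add: pj_lift\<close>)
  have "\<alpha> \<noteq> v1" using assms(7,10,11) by auto
  then have x0: "cr A0 A1 a1 b1 \<noteq> 0" using pj_ne_cr[OF nzA nz1] al v1 by simp
  have "\<alpha> \<noteq> v2" using assms(8,10,11) by auto
  then have x1: "cr A0 A1 a2 b2 \<noteq> 0" using pj_ne_cr[OF nzA nz2] al v2 by simp
  have "\<beta> \<noteq> v1" using assms(7,9,11) by auto
  then have y0: "cr B0 B1 a1 b1 \<noteq> 0" using pj_ne_cr[OF nzB nz1] be v1 by simp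
  have "\<beta> \<noteq> v2" using assms(8,9,11) by auto
  then have y1: "cr B0 B1 a2 b2 \<noteq> 0" using pj_ne_cr[OF nzB nz2] be v2 by simp
  have AB: "cr A0 A1 B0 B1 \<noteq> 0" using pj_ne_cr[OF nzA nzB] al be assms(11) by simp
  have D: "cr a1 b1 a2 b2 \<noteq> 0"
  proof
    assume D0: "cr a1 b1 a2 b2 = 0"
    have "b2 * hm P (l0 c1) (l1 c1) - a2 * hm Q (l0 c1) (l1 c1) = cr a1 b1 a2 b2"
      unfolding a1_def[symmetric] b1_def[symmetric] cr_def by (simp add: algebra_simps)
    then have "k2 * (cr (l0 c2) (l1 c2) (l0 c1) (l1 c1))^2 = 0" using I2 D0 by simp
    then have "cr (l0 c1) (l1 c1) (l0 c2) (l1 c2) = 0" using k2 by (simp add: cr_def algebra_simps)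
    then show False using c12 by simp
  qed
  have FE1: "hm P a1 b1 * B1 = hm Q a1 b1 * B0"
    using assms(7) unfolding f v1 be rm(1)[OF nz1] pj_eq_iff[OF rm(2)[OF nz1] nzB] .
  have FE2: "hm P a2 b2 * B1 = hm Q a2 b2 * B0"
    using assms(8) unfolding f v2 be rm(1)[OF nz2] pj_eq_iff[OF rm(2)[OF nz2] nzB] .
  have FE3: "hm P B0 B1 * A1 = hm Q B0 B1 * A0"
    using assms(9) unfolding f al be rm(1)[OF nzB] pj_eq_iff[OF rm(2)[OF nzB] nzA] .
  have FE4: "hm P A0 A1 * A1 = hm Q A0 A1 * A0"
    using assms(10) unfolding f al rm(1)[OF nzA] pj_eq_iff[OF rm(2)[OF nzA] nzA] .
  define r1 where "r1 = l1 c1 * a2 - l0 c1 * b2"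
  define s1 where "s1 = l0 c1 * b1 - l1 c1 * a1"
  define r2 where "r2 = l1 c2 * a2 - l0 c2 * b2"
  define s2 where "s2 = l0 c2 * b1 - l1 c2 * a1"
  define X0 where "X0 = cr A0 A1 a1 b1"
  define X1 where "X1 = cr A0 A1 a2 b2"
  define Y0 where "Y0 = cr B0 B1 a1 b1"
  define Y1 where "Y1 = cr B0 B1 a2 b2"
  define D where "D = cr a1 b1 a2 b2"
  have h1: "k1* s1^2*Y1 = k2* s2^2*Y0"
    using transfer_eq[OF FE1, of b1 a1 a2 b2] unfolding I1 I2 Y0_def Y1_def s1_def s2_def
    by (simp add: cr_def)
  have h2: "k1*r1^2*Y1 = k2*r2^2*Y0"
  proof -
    have "k1*(cr (l0 c1) (l1 c1) a2 b2)^2*Y1 = k2*(cr (l0 c2) (l1 c2) a2 b2)^2*Y0"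
      using transfer_eq[OF FE2, of b1 a1 a2 b2] unfolding I1 I2 Y0_def Y1_def by simp
    moreover have "(cr (l0 c1) (l1 c1) a2 b2)^2 = r1^2" "(cr (l0 c2) (l1 c2) a2 b2)^2 = r2^2"
      unfolding r1_def r2_def cr_def by (simp_all add: power2_eq_square algebra_simps)
    ultimately show ?thesis by simp
  qed
  have h3: "k1*(r1*Y0+s1*Y1)^2*X1 = k2*(r2*Y0+s2*Y1)^2*X0"
  proof -
    have "k1*(cr (l0 c1) (l1 c1) B0 B1)^2*X1 = k2*(cr (l0 c2) (l1 c2) B0 B1)^2*X0"
      using transfer_eq[OF FE3, of b1 a1 a2 b2] unfolding I1 I2 X0_def X1_def by simp
    then have "D^2 * (k1*(cr (l0 c1) (l1 c1) B0 B1)^2*X1) = D^2 * (k2*(cr (l0 c2) (l1 c2) B0 B1)^2*X0)" by simp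
    moreover have "r1*Y0+s1*Y1 = D * cr (l0 c1) (l1 c1) B0 B1" "r2*Y0+s2*Y1 = D * cr (l0 c2) (l1 c2) B0 B1"
      unfolding r1_def s1_def r2_def s2_def Y0_def Y1_def D_def by (rule lin_id)+
    ultimately show ?thesis by (simp add: power2_eq_square algebra_simps)
  qed
  have h4: "k1*(r1*X0+s1*X1)^2*X1 = k2*(r2*X0+s2*X1)^2*X0"
  proof -
    have "k1*(cr (l0 c1) (l1 c1) A0 A1)^2*X1 = k2*(cr (l0 c2) (l1 c2) A0 A1)^2*X0"
      using transfer_eq[OF FE4, of b1 a1 a2 b2] unfolding I1 I2 X0_def X1_def by simp
    then have "D^2 * (k1*(cr (l0 c1) (l1 c1) A0 A1)^2*X1) = D^2 * (k2*(cr (l0 c2) (l1 c2) A0 A1)^2*X0)" by simp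
    moreover have "r1*X0+s1*X1 = D * cr (l0 c1) (l1 c1) A0 A1" "r2*X0+s2*X1 = D * cr (l0 c2) (l1 c2) A0 A1"
      unfolding r1_def s1_def r2_def s2_def X0_def X1_def D_def by (rule lin_id)+
    ultimately show ?thesis by (simp add: power2_eq_square algebra_simps)
  qed
  have ind: "r1* s2 - r2* s1 \<noteq> 0"
    using ind_id[of "l1 c1" a2 "l0 c1" b2 "l0 c2" b1 "l1 c2" a1] D c12
    unfolding r1_def s1_def r2_def s2_def by simp
  have xy: "X0*Y1 - X1*Y0 \<noteq> 0"
    using xy_id[of A0 A1 a1 b1 B0 B1 a2 b2] D AB unfolding X0_def X1_def Y0_def Y1_def by simp
  have mem: "Y0*X1/(Y1*X0) \<in> {-1, 3 + 2 * of_real (sqrt 2), 3 - 2 * of_real (sqrt 2)}"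
    by (rule E2[OF k1 k2 _ _ _ _ ind xy h1 h2 h3 h4])
       (use x0 x1 y0 y1 in \<open>simp_all add: X0_def X1_def Y0_def Y1_def\<close>)
  have "cross_ratio v1 v2 \<alpha> \<beta> = pj (cr a1 b1 B0 B1 * cr A0 A1 a2 b2) (cr B0 B1 a2 b2 * cr a1 b1 A0 A1)"
    unfolding v1 v2 al be
    by (rule cross_ratio_pj[OF nz1 nz2 nzA nzB D x1]) (use x0 in \<open>simp add: cr_def algebra_simps\<close>)
  also have "\<dots> = pj ((-Y0)*X1) (Y1*(-X0))"
    unfolding X0_def X1_def Y0_def Y1_def by (simp add: cr_def algebra_simps)
  also have "\<dots> = Some (Y0*X1/(Y1*X0))"
    using x0 y1 unfolding X0_def[symmetric] Y1_def[symmetric] by (simp add: pj_def)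
  finally show ?thesis using mem by simp
qed


end
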